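(* Let $S=(S_i)_{i\in\mathbb{Z}}\in\{\pm 1\}^{\mathbb{Z}}$ be a bi-infinite binary sequence whose hull (the closure of its orbit under the shift map in $\{\pm1\}^{\mathbb{Z}}$) is a uniquely ergodic dynamical system under the shift action. Let $\omega_S=\sum_{i\in\mathbb{Z}} S_i\,\delta_i$ and let $\gamma_S=\sum_{m\in\mathbb{Z}}\eta_S(m)\,\delta_m$ be its natural autocorrelation, with coefficients $$\eta_S(m)=\lim_{N\to\infty}\frac{1}{2N+1}\sum_{i=-N}^{N} S_i S_{i-m},$$ so that $\eta_S(0)=1$. Fix $0\le p\le 1$ and let $(Y_i)_{i\in\mathbb{Z}}$ be a family of i.i.d. random variables, each taking the value $+1$ with probability $p$ and $-1$ with probability $1-p$. Define the random Dirac comb (the "Bernoullisation" of $\omega_S$) $$\omega_{S;p}=\sum_{i\in\mathbb{Z}} S_i Y_i\,\delta_i .$$ Then, almost surely, the natural autocorrelation $\gamma_{S;p}=\sum_{m\in\mathbb{Z}}\eta_{S;p}(m)\,\delta_m$ of $\omega_{S;p}$ exists, i.e. for every $m\in\mathbb{Z}$ the limit $\eta_{S;p}(m)=\lim_{N\to\infty}\frac{1}{2N+1}\sum_{i=-N}^{N} Z_iZ_{i-m}$ with $Z_i=S_iY_i$ exists, and one has $\eta_{S;p}(0)=1$ and $\eta_{S;p}(m)=(2p-1)^2\,\eta_S(m)$ for all $m\neq 0$. Equivalently, almost surely $$\gamma_{S;p}=(2p-1)^2\,\gamma_S+4p(1-p)\,\delta_0 .$$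
   Context: $\delta_x$ denotes the Dirac measure at $x\in\mathbb{R}$. For a (weighted) Dirac comb $\omega=\sum_{i\in\mathbb{Z}} w_i\delta_i$ with real weights, its natural autocorrelation (if it exists) is the measure $\gamma=\sum_{m\in\mathbb{Z}}\eta(m)\delta_m$ with $\eta(m)=\lim_{N\to\infty}\frac{1}{2N+1}\sum_{i=-N}^N w_i w_{i-m}$, i.e. the vague limit of $\frac{1}{2N+1}\,\omega_N*\widetilde{\omega_N}$ where $\omega_N$ is the restriction of $\omega$ to $[-N,N]$ and $\widetilde{\mu}(A)=\overline{\mu(-A)}$. *)

theory Defs
  imports "HOL-Probability.Probability"
begin

text \<open>Bi-infinite sequences are elements of \<open>int \<Rightarrow> real\<close> with the product topology
  (Function_Topology); the space of \<open>\<plusminus>1\<close>-sequences is a closed subset of it.\<close>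

definition shift :: "(int \<Rightarrow> real) \<Rightarrow> (int \<Rightarrow> real)" where
  "shift x = (\<lambda>i. x (i + 1))"

definition seq_hull :: "(int \<Rightarrow> real) \<Rightarrow> (int \<Rightarrow> real) set" where
  "seq_hull S = closure ((\<lambda>k i. S (i + k)) ` UNIV)"

definition shift_inv_prob_on :: "(int \<Rightarrow> real) set \<Rightarrow> (int \<Rightarrow> real) measure \<Rightarrow> bool" where
  "shift_inv_prob_on X \<mu> \<longleftrightarrow> prob_space \<mu> \<and> sets \<mu> = sets borel \<and> emeasure \<mu> X = 1 \<and>
     (\<forall>A \<in> sets borel. emeasure \<mu> (shift -` A) = emeasure \<mu> A)"

definition uniquely_ergodic_hull :: "(int \<Rightarrow> real) \<Rightarrow> bool" where
  "uniquely_ergodic_hull S \<longleftrightarrow> (\<exists>!\<mu>. shift_inv_prob_on (seq_hull S) \<mu>)"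

definition autocorr_avg :: "(int \<Rightarrow> real) \<Rightarrow> int \<Rightarrow> nat \<Rightarrow> real" where
  "autocorr_avg w m N = (1 / (2 * real N + 1)) * (\<Sum>i\<in>{-int N..int N}. w i * w (i - m))"

definition eta :: "(int \<Rightarrow> real) \<Rightarrow> int \<Rightarrow> real" where
  "eta w m = lim (autocorr_avg w m)"

end

theory Submission
  imports Defs
begin

definition dec :: "nat \<Rightarrow> int" where
  "dec n = (if even n then int (n div 2) else - int ((n + 1) div 2))"
definition idx :: "int \<Rightarrow> nat" where
  "idx j = (if j \<ge> 0 then 2 * nat j else 2 * nat (-j) - 1)"

lemma dec_idx[simp]: "dec (idx j) = j"
proof (cases "j \<ge> 0")
  case True then show ?thesis unfolding dec_def idx_def by auto
next
  case False
  then have "idx j = 2 * nat (-j) - 1" unfolding idx_def by simp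
  moreover have "odd (2 * nat (-j) - 1)"
  proof -
    obtain k where "nat (-j) = Suc k" using False by (metis gr0_implies_Suc zero_less_nat_eq neg_0_less_iff_less not_le)
    then show ?thesis by simp
  qed
  moreover have "(2 * nat (-j) - 1 + 1) div 2 = nat (-j)" using False by simp
  ultimately show ?thesis unfolding dec_def using False by simp
qed

lemma aux_bd: "0 \<le> (a::real) \<Longrightarrow> a \<le> 2 \<Longrightarrow> \<bar>a / 4^(n+c)\<bar> \<le> 2*(1/4::real)^n"
proof -
  assume a: "0 \<le> a" "a \<le> 2"
  have "(4::real)^n \<le> 4^(n+c)" by (rule power_increasing) auto
  then have "a / 4^(n+c) \<le> 2 / 4^n" using a by (intro frac_le) auto
  then show ?thesis using a by (simp add: power_divide)
qed

lemma Pset_d: "\<forall>i. x i \<in> {-1, 1} \<Longrightarrow> x i + 1 \<in> {0::real, 2}"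
proof -
  assume "\<forall>i. x i \<in> {-1, 1}"
  then have "x i = -1 \<or> x i = 1" by auto
  then show ?thesis by auto
qed

definition enc :: "(int \<Rightarrow> real) \<Rightarrow> real" where
  "enc x = (\<Sum>n. (x (dec n) + 1) / 4 ^ (n + 1))"

lemma digits:
  fixes d :: "nat \<Rightarrow> real"
  assumes d: "\<And>n. d n \<in> {0, 2}"
  shows "\<exists>z::int. \<exists>t. 4 ^ k * (\<Sum>n. d n / 4 ^ (n + 1)) = of_int z + d k / 4 + t \<and> 0 \<le> t \<and> t \<le> 1/6"
proof -
  have bd: "\<bar>d n / 4 ^ (n + 1)\<bar> \<le> 2 * (1/4) ^ n" for n
    using d[of n] by (auto simp: power_divide field_simps)
  have gs: "summable (\<lambda>n. 2 * (1/4::real) ^ n)" by (intro summable_mult summable_geometric) auto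
  have sm: "summable (\<lambda>n. d n / 4 ^ (n + 1))"
    by (rule summable_comparison_test'[OF gs]) (use bd in auto)
  define f where "f n = d n / 4 ^ (n + 1)" for n
  have split: "(\<Sum>n. f n) = (\<Sum>n. f (n + Suc k)) + sum f {..<Suc k}"
    using suminf_split_initial_segment[of f "Suc k"] sm unfolding f_def by simp
  have sm2: "summable (\<lambda>n. f (n + Suc k))" using sm unfolding f_def
    by (subst summable_iff_shift) simp
  define t where "t = 4 ^ k * (\<Sum>n. f (n + Suc k))"
  have t_eq: "t = (\<Sum>n. d (n + Suc k) / 4 ^ (n + 2))"
  proof -
    have "4 ^ k * (\<Sum>n. f (n + Suc k)) = (\<Sum>n. 4 ^ k * f (n + Suc k))"
      using sm2 by (rule suminf_mult[symmetric])
    also have "\<dots> = (\<Sum>n. d (n + Suc k) / 4 ^ (n + 2))"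
      by (rule suminf_cong) (simp add: f_def power_add field_simps)
    finally show ?thesis unfolding t_def .
  qed
  have d02: "0 \<le> d n" "d n \<le> 2" for n using d[of n] by auto
  have sm3: "summable (\<lambda>n. d (n + Suc k) / 4 ^ (n + 2))"
    by (rule summable_comparison_test'[OF gs], unfold real_norm_def, rule aux_bd[OF d02])
  have t0: "0 \<le> t" unfolding t_eq
    by (rule suminf_nonneg[OF sm3]) (simp add: d02)
  have gs2: "(\<lambda>n. 2 / 16 * (1/4::real) ^ n) sums (2/16 * (1 / (1 - 1/4)))"
    by (intro sums_mult geometric_sums) auto
  have t1: "t \<le> 1/6" unfolding t_eq
  proof -
    have le: "d (n + Suc k) / 4 ^ (n + 2) \<le> 2/16*(1/4::real)^n" for n
    proof -
      have "d (n+Suc k) / 4^(n+2) \<le> 2 / 4^(n+2)" using d02 by (intro divide_right_mono) auto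
      also have "\<dots> = 2/16*(1/4)^n" by (simp add: power_add power_divide)
      finally show ?thesis .
    qed
    have "(\<Sum>n. d (n + Suc k) / 4 ^ (n + 2)) \<le> (\<Sum>n. 2 / 16 * (1/4::real) ^ n)"
      by (rule suminf_le[OF _ sm3 sums_summable[OF gs2]]) (rule le)
    also have "\<dots> = 1/6" using sums_unique[OF gs2] by simp
    finally show "(\<Sum>n. d (n + Suc k) / 4 ^ (n + 2)) \<le> 1/6" .
  qed
  have int: "4 ^ k * sum f {..<k} \<in> \<int>"
  proof -
    have "4 ^ k * sum f {..<k} = (\<Sum>n<k. d n * 4 ^ (k - n - 1))"
      unfolding sum_distrib_left f_def
    proof (rule sum.cong[OF refl])
      fix n assume "n \<in> {..<k}"
      then have "k = (k - n - 1) + (n + 1)" by simp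
      then have "(4::real) ^ k = 4 ^ (k - n - 1) * 4 ^ (n + 1)" by (metis power_add)
      then show "4 ^ k * (d n / 4 ^ (n + 1)) = d n * 4 ^ (k - n - 1)" by simp
    qed
    also have "\<dots> \<in> \<int>"
    proof (rule Ints_sum)
      fix n assume "n \<in> {..<k}"
      from d[of n] show "d n * 4 ^ (k - n - 1) \<in> \<int>" by auto
    qed
    finally show ?thesis .
  qed
  then obtain z where z: "4 ^ k * sum f {..<k} = of_int z" by (auto elim: Ints_cases)
  have "4 ^ k * (\<Sum>n. d n / 4 ^ (n + 1)) = 4 ^ k * (\<Sum>n. f n)" unfolding f_def ..
  also have "\<dots> = t + 4 ^ k * sum f {..<k} + 4 ^ k * f k"
    unfolding split t_def by (simp add: algebra_simps)
  also have "\<dots> = of_int z + d k / 4 + t" unfolding z f_def by (simp add: power_add)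
  finally show ?thesis using t0 t1 by blast
qed

definition clamp :: "real \<Rightarrow> real" where
  "clamp v = max (-1) (min 1 v)"

definition D :: "int \<Rightarrow> real \<Rightarrow> real" where
  "D j r = clamp (-2 * cos (2 * pi * (4 ^ idx j * r - 1/12)))"

lemma clamp_cont[continuous_intros]: "continuous_on A f \<Longrightarrow> continuous_on A (\<lambda>x. clamp (f x))"
  unfolding clamp_def by (intro continuous_intros)

lemma D_cont: "continuous_on UNIV (D j)"
  unfolding D_def by (intro continuous_intros)

lemma D_isCont: "isCont (D j) r"
  using D_cont continuous_on_eq_continuous_at by blast

lemma D_bound: "\<bar>D j r\<bar> \<le> 1"
  unfolding D_def clamp_def by auto

lemma cos_shift_int: "cos (2 * pi * (of_int z + y)) = cos (2 * pi * y)"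
proof -
  have "cos (2 * pi * (of_int z + y)) = cos (2 * pi * y + (2 * pi) * of_int z)"
    by (simp add: algebra_simps)
  also have "\<dots> = cos (2 * pi * y)"
    by (simp add: cos_add sin_int_2pin)
  finally show ?thesis .
qed

lemma cos_ge_half: assumes "\<bar>\<theta>\<bar> \<le> pi/3" shows "cos \<theta> \<ge> 1/2"
proof -
  have "cos \<theta> = cos \<bar>\<theta>\<bar>" by (simp add: abs_if)
  also have "\<dots> \<ge> cos (pi/3)"
    by (rule cos_monotone_0_pi_le) (use assms in auto)
  finally show ?thesis by (simp add: cos_60)
qed

lemma ang: "0 \<le> t \<Longrightarrow> t \<le> 1/6 \<Longrightarrow> \<bar>2*pi*(t-1/12)\<bar> \<le> pi/3"
proof -
  assume "0 \<le> t" "t \<le> 1/6"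
  then have a: "\<bar>t - 1/12\<bar> \<le> 1/12" by (auto simp: abs_if)
  have "\<bar>2*pi*(t-1/12)\<bar> = 2*pi*\<bar>t-1/12\<bar>" by (simp add: abs_mult)
  also have "\<dots> \<le> 2*pi*(1/12)" using a by (intro mult_left_mono) auto
  finally show ?thesis by simp
qed

definition Pset :: "(int \<Rightarrow> real) set" where
  "Pset = {x. \<forall>i. x i \<in> {-1, 1}}"

lemma D_enc: assumes "x \<in> Pset" shows "D j (enc x) = x j"
proof -
  define d where "d n = x (dec n) + 1" for n
  have d: "d n \<in> {0, 2}" for n using assms unfolding Pset_def d_def by (intro Pset_d) auto
  obtain z t where zt: "4 ^ idx j * (\<Sum>n. d n / 4 ^ (n + 1)) = of_int z + d (idx j) / 4 + t"
    "0 \<le> t" "t \<le> 1/6"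
  proof -
    have "\<exists>z::int. \<exists>t. 4 ^ idx j * (\<Sum>n. d n / 4 ^ (n + 1)) = of_int z + d (idx j) / 4 + t \<and> 0 \<le> t \<and> t \<le> 1/6"
      by (rule digits) (rule d)
    then show ?thesis using that by blast
  qed
  have e: "4 ^ idx j * enc x = of_int z + (d (idx j) / 4 + t)"
    using zt(1) unfolding enc_def d_def by simp
  have c: "cos (2 * pi * (4 ^ idx j * enc x - 1/12)) = cos (2 * pi * (d (idx j) / 4 + t - 1/12))"
    unfolding e using cos_shift_int[of z "d (idx j) / 4 + t - 1/12"] by (simp add: algebra_simps)
  have dj: "d (idx j) = x j + 1" unfolding d_def by simp
  show ?thesis
  proof (cases "x j = 1")
    case True
    then have "d (idx j) = 2" using dj by simp
    then have "cos (2 * pi * (d (idx j) / 4 + t - 1/12)) = - cos (2 * pi * (t - 1/12))"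
    proof -
      assume "d (idx j) = 2"
      then have "2 * pi * (d (idx j) / 4 + t - 1/12) = 2 * pi * (t - 1/12) + pi"
        by (simp add: algebra_simps)
      then show ?thesis by simp
    qed
    moreover have "cos (2 * pi * (t - 1/12)) \<ge> 1/2"
      by (rule cos_ge_half, rule ang[OF zt(2,3)])
    ultimately show ?thesis using True unfolding D_def clamp_def c by auto
  next
    case False
    then have "x j = -1" using assms unfolding Pset_def by auto
    then have "d (idx j) = 0" using dj by simp
    moreover have "cos (2 * pi * (t - 1/12)) \<ge> 1/2"
      by (rule cos_ge_half, rule ang[OF zt(2,3)])
    ultimately show ?thesis using \<open>x j = -1\<close> unfolding D_def clamp_def c by auto
  qed
qed

lemma enc_bounds: assumes "x \<in> Pset" shows "0 \<le> enc x" "enc x \<le> 2/3"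
proof -
  define d where "d n = x (dec n) + 1" for n
  have d: "d n \<in> {0, 2}" for n using assms unfolding Pset_def d_def by (intro Pset_d) auto
  have gs: "(\<lambda>n. 2 / 4 * (1/4::real) ^ n) sums (2/4 * (1 / (1 - 1/4)))"
    by (intro sums_mult geometric_sums) auto
  have d02: "0 \<le> d n" "d n \<le> 2" for n using d[of n] by auto
  have sm: "summable (\<lambda>n. d n / 4 ^ (n + 1))"
  proof -
    have gs0: "summable (\<lambda>n. 2*(1/4::real)^n)" by (intro summable_mult summable_geometric) auto
    show ?thesis by (rule summable_comparison_test'[OF gs0], unfold real_norm_def, rule aux_bd[OF d02])
  qed
  have "0 \<le> (\<Sum>n. d n / 4 ^ (n + 1))" by (rule suminf_nonneg[OF sm]) (simp add: d02)
  then show "0 \<le> enc x" unfolding enc_def d_def by simp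
  have le: "d n / 4 ^ (n + 1) \<le> 2/4*(1/4::real)^n" for n
  proof -
    have "d n / 4^(n+1) \<le> 2 / 4^(n+1)" using d02 by (intro divide_right_mono) auto
    also have "\<dots> = 2/4*(1/4)^n" by (simp add: power_add power_divide)
    finally show ?thesis .
  qed
  have "(\<Sum>n. d n / 4 ^ (n + 1)) \<le> (\<Sum>n. 2 / 4 * (1/4::real) ^ n)"
    by (rule suminf_le[OF _ sm sums_summable[OF gs]]) (rule le)
  also have "\<dots> = 2/3" using sums_unique[OF gs] by simp
  finally show "enc x \<le> 2/3" unfolding enc_def d_def by simp
qed

definition pt :: "(int \<Rightarrow> real) \<Rightarrow> int \<Rightarrow> real" where
  "pt S i = enc (\<lambda>j. S (j + i))"

definition emp :: "(int \<Rightarrow> real) \<Rightarrow> nat \<Rightarrow> real measure" where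
  "emp S N = distr (uniform_count_measure {-int N..int N}) borel (pt S)"

definition avgf :: "(int \<Rightarrow> real) \<Rightarrow> nat \<Rightarrow> (real \<Rightarrow> real) \<Rightarrow> real" where
  "avgf S N g = (\<Sum>i\<in>{-int N..int N}. g (pt S i)) / (2 * real N + 1)"

definition psi :: "real \<Rightarrow> (int \<Rightarrow> real)" where
  "psi r = (\<lambda>j. D j r)"

lemma shiftS_P: "\<forall>i. S i \<in> {-1, 1} \<Longrightarrow> (\<lambda>j. S (j + i)) \<in> Pset"
  unfolding Pset_def by auto

lemma D_pt: "\<forall>i. S i \<in> {-1, 1} \<Longrightarrow> D j (pt S i) = S (j + i)"
  unfolding pt_def using D_enc[OF shiftS_P] by simp

lemma psi_pt: "\<forall>i. S i \<in> {-1, 1} \<Longrightarrow> psi (pt S i) = (\<lambda>j. S (j + i))"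
  unfolding psi_def using D_pt by auto

lemma pt_bounds: "\<forall>i. S i \<in> {-1, 1} \<Longrightarrow> 0 \<le> pt S i \<and> pt S i \<le> 2/3"
  unfolding pt_def using enc_bounds[OF shiftS_P] by auto

lemma psi_cont: "continuous_on UNIV psi"
  unfolding psi_def by (intro continuous_on_coordinatewise_then_product D_cont)

lemma psi_meas[measurable]: "psi \<in> borel_measurable borel"
  by (rule borel_measurable_continuous_onI[OF psi_cont])

lemma shift_cont: "continuous_on UNIV shift"
  unfolding shift_def
  by (intro continuous_on_coordinatewise_then_product continuous_on_product_coordinates)

lemma shift_meas[measurable]: "shift \<in> borel_measurable borel"
  by (rule borel_measurable_continuous_onI[OF shift_cont])

lemma fin_ivl: "finite {-int N..int N}" "{-int N..int N} \<noteq> {}"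
  by auto

lemma emp_prob: "prob_space (emp S N)"
  unfolding emp_def
  by (rule prob_space.prob_space_distr[OF prob_space_uniform_count_measure[OF fin_ivl]])
     (simp add: measurable_cong_sets[OF sets_uniform_count_measure_count_space refl])

lemma emp_rd: "real_distribution (emp S N)"
  unfolding real_distribution_def real_distribution_axioms_def using emp_prob
  by (auto simp: emp_def)

lemma emp_integral:
  assumes [measurable]: "g \<in> borel_measurable borel"
  shows "integral\<^sup>L (emp S N) g = avgf S N g"
proof -
  have "integral\<^sup>L (emp S N) g = integral\<^sup>L (uniform_count_measure {-int N..int N}) (\<lambda>i. g (pt S i))"
    unfolding emp_def
    by (rule integral_distr) (simp_all add: measurable_cong_sets[OF sets_uniform_count_measure_count_space refl])
  also have "\<dots> = avgf S N g"
    unfolding integral_uniform_count_measure[OF fin_ivl(1)] avgf_def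
    by (simp add: nat_add_distrib)
  finally show ?thesis .
qed

lemma emp_tight: assumes "\<forall>i. S i \<in> {-1, 1}" shows "tight (emp S)"
  unfolding tight_def
proof (intro conjI allI impI)
  show "real_distribution (emp S n)" for n by (rule emp_rd)
  fix e :: real assume "0 < e"
  have "measure (emp S n) {-1<..1} = 1" for n
  proof -
    have "measure (emp S n) {-1<..1} = measure (uniform_count_measure {-int n..int n}) (pt S -` {-1<..1} \<inter> {-int n..int n})"
      unfolding emp_def
      by (subst measure_distr) (simp_all add: measurable_cong_sets[OF sets_uniform_count_measure_count_space refl] space_uniform_count_measure)
    also have "pt S -` {-1<..1} \<inter> {-int n..int n} = {-int n..int n}"
    proof -
      have "pt S i \<in> {-1<..1}" for i using pt_bounds[OF assms, of i] by auto
      then show ?thesis by auto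
    qed
    also have "measure (uniform_count_measure {-int n..int n}) {-int n..int n} = 1"
      using prob_space.prob_space[OF prob_space_uniform_count_measure[OF fin_ivl]]
      by (simp add: space_uniform_count_measure)
    finally show ?thesis .
  qed
  then show "\<exists>a b. a < b \<and> (\<forall>n. 1 - e < measure (emp S n) {a<..b})"
    using \<open>0 < e\<close> by (intro exI[of _ "-1"] exI[of _ 1]) auto
qed

lemma subseq_limit:
  fixes s :: "nat \<Rightarrow> nat"
  assumes S: "\<forall>i. S i \<in> {-1, 1}" and s: "strict_mono s"
  shows "\<exists>r \<nu>. strict_mono r \<and> real_distribution \<nu> \<and>
     (\<forall>g B. (\<forall>x. isCont g x) \<longrightarrow> (\<forall>x. norm (g x) \<le> B) \<longrightarrow>
        (\<lambda>n. avgf S (s (r n)) g) \<longlonglongrightarrow> integral\<^sup>L \<nu> g)"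
proof -
  obtain r :: "nat \<Rightarrow> nat" and \<nu> where r: "strict_mono r" "real_distribution \<nu>" "weak_conv_m (emp S \<circ> s \<circ> r) \<nu>"
    using tight_imp_convergent_subsubsequence emp_tight[OF S] s by blast
  have "(\<lambda>n. avgf S (s (r n)) g) \<longlonglongrightarrow> integral\<^sup>L \<nu> g"
    if g: "\<forall>x. isCont g x" "\<forall>x. norm (g x) \<le> B" for g B
  proof -
    have gm: "g \<in> borel_measurable borel"
      using g by (intro borel_measurable_continuous_onI continuous_at_imp_continuous_on) auto
    have "(\<lambda>n. integral\<^sup>L ((emp S \<circ> s \<circ> r) n) g) \<longlonglongrightarrow> integral\<^sup>L \<nu> g"
      by (rule weak_conv_imp_integral_bdd_continuous_conv[OF _ r(2) r(3)]) (use emp_rd g in auto)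
    then show ?thesis using emp_integral[OF gm] by simp
  qed
  then show ?thesis using r by blast
qed

lemma coord_cont: "continuous (at x) (\<lambda>x::int \<Rightarrow> real. x i)"
  using continuous_on_product_coordinates[of i] continuous_on_eq_continuous_at by blast

lemma Pset_closed: "closed Pset"
proof -
  have "Pset = (\<Inter>i. (\<lambda>x. x i) -` {-1, 1})" unfolding Pset_def by auto
  moreover have "closed ((\<lambda>x::int\<Rightarrow>real. x i) -` {-1, 1})" for i
    by (rule continuous_closed_vimage) (auto intro: coord_cont)
  moreover have "closed (\<Inter>i. (\<lambda>x::int\<Rightarrow>real. x i) -` {-1, 1})"
    by (rule closed_INT) (use calculation(2) in auto)
  ultimately show ?thesis by simp
qed

lemma orbit_in_hull: "(\<lambda>j. S (j + i)) \<in> seq_hull S"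
  unfolding seq_hull_def by (rule subsetD[OF closure_subset]) auto

lemma hull_P: assumes "\<forall>i. S i \<in> {-1, 1}" shows "seq_hull S \<subseteq> Pset"
  unfolding seq_hull_def
  by (rule closure_minimal[OF _ Pset_closed]) (use assms in \<open>auto simp: Pset_def\<close>)

lemma hull_closed: "closed (seq_hull S)" unfolding seq_hull_def by simp

lemma D_meas[measurable]: "D j \<in> borel_measurable borel"
  by (rule borel_measurable_continuous_onI[OF D_cont])

definition q :: "real set \<Rightarrow> real \<Rightarrow> real" where
  "q A v = (if 1 \<in> A then (1 + v) / 2 else 0) + (if -1 \<in> A then (1 - v) / 2 else 0)"

lemma q_cont: "continuous_on UNIV (q A)"
  unfolding q_def by (cases "1 \<in> A"; cases "-1 \<in> A") (auto intro!: continuous_intros)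

lemma q_bounds: "\<bar>v\<bar> \<le> 1 \<Longrightarrow> 0 \<le> q A v \<and> q A v \<le> 1"
  unfolding q_def by (cases "1 \<in> A"; cases "-1 \<in> A") (auto simp: abs_le_iff field_simps)

lemma q_pm: "v \<in> {-1, 1} \<Longrightarrow> q A v = indicator A v"
  unfolding q_def by auto

lemma prod_ind: "finite J \<Longrightarrow> (\<Prod>j\<in>J. (if P j then 1 else 0::real)) = (if \<forall>j\<in>J. P j then 1 else 0)"
  by (induct rule: finite_induct) auto

definition cylf :: "int set \<Rightarrow> (int \<Rightarrow> real set) \<Rightarrow> int \<Rightarrow> real \<Rightarrow> real" where
  "cylf J A k r = (\<Prod>j\<in>J. q (A j) (D (j + k) r))"

lemma cylf_cont: "continuous_on UNIV (cylf J A k)"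
  unfolding cylf_def
  by (intro continuous_on_prod continuous_on_compose2[OF q_cont D_cont]) auto

lemma cylf_isCont: "isCont (cylf J A k) r"
  using cylf_cont continuous_on_eq_continuous_at by blast

lemma cylf_bounds: "0 \<le> cylf J A k r \<and> cylf J A k r \<le> 1"
  unfolding cylf_def using q_bounds[OF D_bound]
  by (auto intro: prod_nonneg prod_le_1)

locale lim_setup =
  fixes S :: "int \<Rightarrow> real" and \<nu> :: "real measure" and t :: "nat \<Rightarrow> nat"
  assumes S: "\<forall>i. S i \<in> {-1, 1}"
    and nu: "real_distribution \<nu>"
    and t: "strict_mono t"
    and conv: "\<forall>g B. (\<forall>x. isCont g x) \<longrightarrow> (\<forall>x. norm (g x) \<le> B) \<longrightarrow>
        (\<lambda>n. avgf S (t n) g) \<longlonglongrightarrow> integral\<^sup>L \<nu> g"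
begin

interpretation nu: real_distribution \<nu> by (rule nu)

definition G where "G = psi -` seq_hull S"

lemma G_closed: "closed G"
  unfolding G_def
  by (rule continuous_closed_vimage[OF hull_closed])
     (use psi_cont continuous_on_eq_continuous_at in blast)

lemma pt_G: "pt S i \<in> G"
  unfolding G_def using psi_pt[OF S] orbit_in_hull by auto

lemma G_ne: "G \<noteq> {}" using pt_G by auto

lemma G_D: "r \<in> G \<Longrightarrow> D j r \<in> {-1, 1}"
  using hull_P[OF S] unfolding G_def psi_def Pset_def by auto

lemma G_meas[measurable]: "G \<in> sets borel"
  using G_closed by (simp add: borel_closed)

lemma nu_G: "measure \<nu> G = 1"
proof -
  define g where "g k r = max 0 (1 - real (Suc k) * infdist r G)" for k r
  have gc: "isCont (g k) r" for k r
    unfolding g_def by (intro continuous_intros)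
  have gb: "norm (g k r) \<le> 1" for k r
    unfolding g_def using infdist_nonneg[of r G] by auto
  have gm[measurable]: "g k \<in> borel_measurable borel" for k
    using gc by (intro borel_measurable_continuous_onI continuous_at_imp_continuous_on) auto
  have avg1: "avgf S N (g k) = 1" for N k
  proof -
    have "g k (pt S i) = 1" for i unfolding g_def using pt_G[of i] by simp
    then show ?thesis unfolding avgf_def by (simp add: nat_add_distrib)
  qed
  have int1: "integral\<^sup>L \<nu> (g k) = 1" for k
  proof -
    have "(\<lambda>n. avgf S (t n) (g k)) \<longlonglongrightarrow> integral\<^sup>L \<nu> (g k)"
      using conv gc gb by blast
    then show ?thesis unfolding avg1 by (simp add: LIMSEQ_const_iff)
  qed
  have lim: "(\<lambda>k. g k r) \<longlonglongrightarrow> indicator G r" for r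
  proof (cases "r \<in> G")
    case True then show ?thesis unfolding g_def by simp
  next
    case False
    then have pos: "infdist r G > 0"
      using in_closed_iff_infdist_zero[OF G_closed G_ne] infdist_nonneg[of r G] by auto
    obtain K where K: "real K > 1 / infdist r G" using reals_Archimedean2 by blast
    have "eventually (\<lambda>k. g k r = 0) sequentially"
      unfolding eventually_sequentially
    proof (intro exI[of _ K] allI impI)
      fix k assume "K \<le> k"
      then have "real (Suc k) > 1 / infdist r G" using K by simp
      then have "real (Suc k) * infdist r G > 1" using pos by (simp add: field_simps)
      then show "g k r = 0" unfolding g_def by simp
    qed
    then show ?thesis using False by (simp add: tendsto_eventually)
  qed
  have "(\<lambda>k. integral\<^sup>L \<nu> (g k)) \<longlonglongrightarrow> integral\<^sup>L \<nu> (indicator G)"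
    by (rule integral_dominated_convergence[where w="\<lambda>_. 1"]) (use lim gb in auto)
  then have "integral\<^sup>L \<nu> (indicator G :: real \<Rightarrow> real) = 1" unfolding int1 by (simp add: LIMSEQ_const_iff)
  then show ?thesis by simp
qed

lemma AE_G: "AE r in \<nu>. r \<in> G"
  using nu.AE_prob_1[OF nu_G] .

lemma cyl_measure:
  assumes J: "finite J" and A: "\<And>j. j \<in> J \<Longrightarrow> A j \<in> sets borel"
  shows "measure \<nu> {r. \<forall>j\<in>J. D (j + k) r \<in> A j} = integral\<^sup>L \<nu> (cylf J A k)"
proof -
  have "measure \<nu> {r. \<forall>j\<in>J. D (j + k) r \<in> A j} = integral\<^sup>L \<nu> (indicator {r. \<forall>j\<in>J. D (j + k) r \<in> A j})"
    by simp
  also have "\<dots> = integral\<^sup>L \<nu> (cylf J A k)"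
  proof (rule integral_cong_AE)
    show "indicator {r. \<forall>j\<in>J. D (j + k) r \<in> A j} \<in> borel_measurable \<nu>"
      using J A by measurable
    show "cylf J A k \<in> borel_measurable \<nu>"
      using cylf_cont by (simp add: borel_measurable_continuous_onI)
    show "AE r in \<nu>. indicator {r. \<forall>j\<in>J. D (j + k) r \<in> A j} r = cylf J A k r"
      using AE_G
    proof eventually_elim
      fix r assume r: "r \<in> G"
      have "cylf J A k r = (\<Prod>j\<in>J. (if D (j + k) r \<in> A j then 1 else 0))"
        unfolding cylf_def using q_pm[OF G_D[OF r]] by (intro prod.cong) (auto simp: indicator_def)
      also have "\<dots> = indicator {r. \<forall>j\<in>J. D (j + k) r \<in> A j} r"
        using prod_ind[OF J] by (simp add: indicator_def)
      finally show "indicator {r. \<forall>j\<in>J. D (j + k) r \<in> A j} r = cylf J A k r" by simp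
    qed
  qed
  finally show ?thesis .
qed

lemma cyl_shift:
  "integral\<^sup>L \<nu> (cylf J A 1) = integral\<^sup>L \<nu> (cylf J A 0)"
proof -
  define h where "h i = (\<Prod>j\<in>J. q (A j) (S (j + i)))" for i
  have hb: "\<bar>h i\<bar> \<le> 1" for i
  proof -
    have "\<bar>S (j + i)\<bar> \<le> 1" for j
    proof -
      have "S (j + i) \<in> {-1, 1}" using S by blast
      then show ?thesis by auto
    qed
    then have "0 \<le> h i \<and> h i \<le> 1" unfolding h_def using q_bounds
      by (auto intro: prod_nonneg prod_le_1)
    then show ?thesis by auto
  qed
  have e0: "avgf S N (cylf J A 0) = (\<Sum>i\<in>{-int N..int N}. h i) / (2 * real N + 1)" for N
    unfolding avgf_def cylf_def h_def by (simp add: D_pt[OF S] add.assoc)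
  have e1: "avgf S N (cylf J A 1) = (\<Sum>i\<in>{-int N..int N}. h (i + 1)) / (2 * real N + 1)" for N
    unfolding avgf_def cylf_def h_def by (simp add: D_pt[OF S] algebra_simps)
  have sh: "(\<Sum>i\<in>{-int N..int N}. h (i + 1)) = (\<Sum>i\<in>{-int N + 1..int N + 1}. h i)" for N
  proof -
    have "(\<Sum>i\<in>{-int N..int N}. h (i + 1)) = sum h ((\<lambda>i. i + 1) ` {-int N..int N})"
      by (subst sum.reindex) (auto simp: inj_on_def)
    also have "(\<lambda>i. i + 1) ` {-int N..int N} = {-int N + 1..int N + 1}" by simp
    finally show ?thesis .
  qed
  have tel: "(\<Sum>i\<in>{-int N..int N}. h (i + 1)) - (\<Sum>i\<in>{-int N..int N}. h i) = h (int N + 1) - h (-int N)" for N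
  proof -
    have a: "{-int N..int N + 1} = insert (int N + 1) {-int N..int N}" by auto
    have b: "{-int N..int N + 1} = insert (-int N) {-int N + 1..int N + 1}" by auto
    have "sum h {-int N..int N + 1} = h (int N + 1) + sum h {-int N..int N}"
      unfolding a by (subst sum.insert) auto
    moreover have "sum h {-int N..int N + 1} = h (-int N) + sum h {-int N + 1..int N + 1}"
      unfolding b by (subst sum.insert) auto
    ultimately show ?thesis unfolding sh by simp
  qed
  have diff: "\<bar>avgf S N (cylf J A 1) - avgf S N (cylf J A 0)\<bar> \<le> 2 / (real N + 1)" for N
  proof -
    have "avgf S N (cylf J A 1) - avgf S N (cylf J A 0) = (h (int N + 1) - h (-int N)) / (2 * real N + 1)"
      unfolding e0 e1 tel[symmetric] by (simp add: diff_divide_distrib)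
    moreover have "\<bar>h (int N + 1) - h (-int N)\<bar> \<le> 2" using hb[of "int N + 1"] hb[of "-int N"] by auto
    ultimately have "\<bar>avgf S N (cylf J A 1) - avgf S N (cylf J A 0)\<bar> \<le> 2 / (2 * real N + 1)"
      by (simp add: abs_divide divide_right_mono)
    also have "\<dots> \<le> 2 / (real N + 1)" by (intro divide_left_mono) auto
    finally show ?thesis .
  qed
  have l1: "(\<lambda>n. avgf S (t n) (cylf J A 1)) \<longlonglongrightarrow> integral\<^sup>L \<nu> (cylf J A 1)"
    using conv cylf_isCont cylf_bounds by (metis abs_of_nonneg real_norm_def)
  have l0: "(\<lambda>n. avgf S (t n) (cylf J A 0)) \<longlonglongrightarrow> integral\<^sup>L \<nu> (cylf J A 0)"
    using conv cylf_isCont cylf_bounds by (metis abs_of_nonneg real_norm_def)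
  have "(\<lambda>n. avgf S (t n) (cylf J A 1) - avgf S (t n) (cylf J A 0)) \<longlonglongrightarrow> 0"
  proof (rule Lim_null_comparison)
    show "\<forall>\<^sub>F n in sequentially. norm (avgf S (t n) (cylf J A 1) - avgf S (t n) (cylf J A 0)) \<le> 2 / (real n + 1)"
    proof (intro always_eventually allI)
      fix n
      have "2 / (real (t n) + 1) \<le> 2 / (real n + 1)"
        using seq_suble[OF t, of n] by (intro divide_left_mono) auto
      then show "norm (avgf S (t n) (cylf J A 1) - avgf S (t n) (cylf J A 0)) \<le> 2 / (real n + 1)"
        using diff[of "t n"] by simp
    qed
    show "(\<lambda>n. 2 / (real n + 1)) \<longlonglongrightarrow> 0"
      using tendsto_mult_left_zero[OF LIMSEQ_inverse_real_of_nat, of 2]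
      by (simp add: divide_inverse add.commute)
  qed
  moreover have "(\<lambda>n. avgf S (t n) (cylf J A 1) - avgf S (t n) (cylf J A 0)) \<longlonglongrightarrow>
      integral\<^sup>L \<nu> (cylf J A 1) - integral\<^sup>L \<nu> (cylf J A 0)"
    by (intro tendsto_diff l1 l0)
  ultimately show ?thesis using LIMSEQ_unique by fastforce
qed

end

lemma coord_meas[measurable]: "(\<lambda>x::int\<Rightarrow>real. x i) \<in> borel_measurable borel"
  by (rule borel_measurable_continuous_onI) simp

lemma sets_fun_borel: "sets (Pi\<^sub>M UNIV (\<lambda>_::int. borel :: real measure)) = sets borel"
  by (rule sets_PiM_equal_borel)

context lim_setup begin

interpretation nu: real_distribution \<nu> by (rule nu)

definition mu where "mu = distr \<nu> borel psi"

lemma mu_prob: "prob_space mu"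
  unfolding mu_def by (rule nu.prob_space_distr) simp

lemma sets_mu[simp]: "sets mu = sets borel" unfolding mu_def by simp
lemma space_mu[simp]: "space mu = UNIV" unfolding mu_def by simp

lemma shm: "shift \<in> measurable mu borel"
  using shift_meas by (simp add: measurable_cong_sets[OF sets_mu refl])

lemma mu_shift: "distr mu borel shift = mu"
proof (rule measure_eqI_PiM_infinite[where I=UNIV and M="\<lambda>_::int. borel :: real measure"])
  show "sets (distr mu borel shift) = sets (Pi\<^sub>M UNIV (\<lambda>_::int. borel :: real measure))"
    unfolding sets_fun_borel by simp
  show "sets mu = sets (Pi\<^sub>M UNIV (\<lambda>_::int. borel :: real measure))"
    unfolding sets_fun_borel by simp
  show "finite_measure (distr mu borel shift)"
    using prob_space.finite_measure[OF prob_space.prob_space_distr[OF mu_prob shm]] .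
  fix A :: "int \<Rightarrow> real set" and J :: "int set"
  assume J: "finite J" "J \<subseteq> UNIV" and A: "\<And>i. i \<in> J \<Longrightarrow> A i \<in> sets borel"
  have E: "prod_emb UNIV (\<lambda>_. borel) J (Pi\<^sub>E J A) = {x. \<forall>j\<in>J. x j \<in> A j}"
    by (auto simp: prod_emb_def restrict_PiE_iff PiE_UNIV_domain)
  have "prod_emb UNIV (\<lambda>_. borel) J (Pi\<^sub>E J A) \<in> sets (Pi\<^sub>M UNIV (\<lambda>_::int. borel :: real measure))"
    by (rule sets_PiM_I) (use J A in auto)
  then have Em: "{x::int\<Rightarrow>real. \<forall>j\<in>J. x j \<in> A j} \<in> sets borel"
    unfolding E sets_fun_borel .
  have v1: "psi -` (shift -` {x. \<forall>j\<in>J. x j \<in> A j}) = {r. \<forall>j\<in>J. D (j + 1) r \<in> A j}"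
    by (auto simp: psi_def shift_def)
  have v0: "psi -` {x. \<forall>j\<in>J. x j \<in> A j} = {r. \<forall>j\<in>J. D (j + 0) r \<in> A j}"
    by (auto simp: psi_def)
  have psm: "psi \<in> measurable \<nu> borel"
    using psi_meas by (simp add: measurable_cong_sets[OF nu.events_eq_borel refl])
  have spn: "space \<nu> = UNIV" using sets_eq_imp_space_eq[OF nu.events_eq_borel] by simp
  have Em2: "shift -` {x. \<forall>j\<in>J. x j \<in> A j} \<in> sets borel"
    using measurable_sets_borel[OF shift_meas Em] by simp
  have "emeasure (distr mu borel shift) {x. \<forall>j\<in>J. x j \<in> A j} = emeasure mu (shift -` {x. \<forall>j\<in>J. x j \<in> A j} \<inter> space mu)"
    by (rule emeasure_distr[OF shm Em])
  also have "\<dots> = emeasure mu (shift -` {x. \<forall>j\<in>J. x j \<in> A j})" by simp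
  also have "\<dots> = emeasure \<nu> (psi -` (shift -` {x. \<forall>j\<in>J. x j \<in> A j}) \<inter> space \<nu>)"
    unfolding mu_def by (rule emeasure_distr[OF psm Em2])
  also have "\<dots> = emeasure \<nu> {r. \<forall>j\<in>J. D (j + 1) r \<in> A j}"
    unfolding v1 spn by simp
  also have "\<dots> = measure \<nu> {r. \<forall>j\<in>J. D (j + 1) r \<in> A j}"
    by (simp add: nu.emeasure_eq_measure)
  also have "\<dots> = integral\<^sup>L \<nu> (cylf J A 1)" using cyl_measure[OF J(1) A, where k=1] by simp
  also have "\<dots> = integral\<^sup>L \<nu> (cylf J A 0)" using cyl_shift by simp
  also have "\<dots> = measure \<nu> {r. \<forall>j\<in>J. D (j + 0) r \<in> A j}" using cyl_measure[OF J(1) A, where k=0] by simp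
  also have "\<dots> = emeasure \<nu> {r. \<forall>j\<in>J. D (j + 0) r \<in> A j}"
    by (simp add: nu.emeasure_eq_measure)
  also have "\<dots> = emeasure \<nu> (psi -` {x. \<forall>j\<in>J. x j \<in> A j} \<inter> space \<nu>)"
    unfolding v0 spn by simp
  also have "\<dots> = emeasure mu {x. \<forall>j\<in>J. x j \<in> A j}"
    unfolding mu_def by (rule emeasure_distr[OF psm Em, symmetric])
  finally show "emeasure (distr mu borel shift) (prod_emb UNIV (\<lambda>_. borel) J (Pi\<^sub>E J A)) =
      emeasure mu (prod_emb UNIV (\<lambda>_. borel) J (Pi\<^sub>E J A))" unfolding E .
qed

lemma mu_inv: "shift_inv_prob_on (seq_hull S) mu"
  unfolding shift_inv_prob_on_def
proof (intro conjI ballI)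
  show "prob_space mu" by (rule mu_prob)
  show "sets mu = sets borel" by simp
  have hm: "seq_hull S \<in> sets borel" using hull_closed by (simp add: borel_closed)
  have psm: "psi \<in> measurable \<nu> borel"
    using psi_meas by (simp add: measurable_cong_sets[OF nu.events_eq_borel refl])
  have spn: "space \<nu> = UNIV" using sets_eq_imp_space_eq[OF nu.events_eq_borel] by simp
  have "emeasure mu (seq_hull S) = emeasure \<nu> G"
    unfolding mu_def G_def using emeasure_distr[OF psm hm] spn by simp
  also have "\<dots> = 1" using nu_G by (simp add: nu.emeasure_eq_measure)
  finally show "emeasure mu (seq_hull S) = 1" .
  fix A :: "(int \<Rightarrow> real) set" assume A: "A \<in> sets borel"
  have "emeasure mu A = emeasure (distr mu borel shift) A" unfolding mu_shift ..
  also have "\<dots> = emeasure mu (shift -` A \<inter> space mu)"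
    by (rule emeasure_distr[OF _ A]) (use shift_meas in \<open>simp add: measurable_cong_sets[OF sets_mu refl]\<close>)
  finally show "emeasure mu (shift -` A) = emeasure mu A" by simp
qed

lemma mu_int: "integral\<^sup>L mu (\<lambda>x. x 0 * x (-m)) = integral\<^sup>L \<nu> (\<lambda>r. D 0 r * D (-m) r)"
proof -
  have psm: "psi \<in> measurable \<nu> borel"
    using psi_meas by (simp add: measurable_cong_sets[OF nu.events_eq_borel refl])
  have fm: "(\<lambda>x::int\<Rightarrow>real. x 0 * x (-m)) \<in> borel_measurable borel" by measurable
  show ?thesis unfolding mu_def integral_distr[OF psm fm] by (simp add: psi_def)
qed

end

lemma D_prod_cont: "isCont (\<lambda>r. D 0 r * D (-m) r) x"
  by (intro isCont_mult D_isCont)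

lemma D_prod_bd: "norm (D 0 r * D (-m) r) \<le> 1"
  using D_bound[of 0 r] D_bound[of "-m" r] by (simp add: abs_mult mult_le_one)

lemma autocorr_avgf: assumes S: "\<forall>i. S i \<in> {-1, 1}"
  shows "autocorr_avg S m N = avgf S N (\<lambda>r. D 0 r * D (-m) r)"
  unfolding autocorr_avg_def avgf_def using D_pt[OF S] by (simp add: algebra_simps)

theorem S_conv:
  assumes S: "\<forall>i. S i \<in> {-1, 1}" and ue: "uniquely_ergodic_hull S"
  shows "convergent (autocorr_avg S m)"
proof -
  obtain \<mu>0 where uniq: "\<And>\<mu>. shift_inv_prob_on (seq_hull S) \<mu> \<Longrightarrow> \<mu> = \<mu>0"
    using ue unfolding uniquely_ergodic_hull_def by blast
  define L where "L = integral\<^sup>L \<mu>0 (\<lambda>x. x 0 * x (-m))"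
  have "autocorr_avg S m \<longlonglongrightarrow> L"
  proof (rule ccontr)
    assume "\<not> autocorr_avg S m \<longlonglongrightarrow> L"
    then obtain e where "e > 0" and "infinite {n. \<not> dist (autocorr_avg S m n) L < e}"
      by (auto simp: tendsto_iff not_eventually INFM_iff_infinite cofinite_eq_sequentially[symmetric])
    then obtain s :: "nat \<Rightarrow> nat" where s: "\<And>n. \<not> dist (autocorr_avg S m (s n)) L < e" and "strict_mono s"
      using enumerate_in_set enumerate_mono by (fastforce simp: strict_mono_def)
    from subseq_limit[OF S \<open>strict_mono s\<close>] obtain r :: "nat \<Rightarrow> nat" and \<nu> where
      rr: "strict_mono r \<and> real_distribution \<nu> \<and> (\<forall>g B. (\<forall>x. isCont g x) \<longrightarrow> (\<forall>x. norm (g x) \<le> B) \<longrightarrow>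
        (\<lambda>n. avgf S (s (r n)) g) \<longlonglongrightarrow> integral\<^sup>L \<nu> g)"
      by (elim exE) (rule that)
    have r: "strict_mono r" "real_distribution \<nu>"
      "\<And>g B. (\<forall>x. isCont g x) \<Longrightarrow> (\<forall>x. norm (g x) \<le> B) \<Longrightarrow>
        (\<lambda>n. avgf S (s (r n)) g) \<longlonglongrightarrow> integral\<^sup>L \<nu> g"
      using rr by auto
    have c4: "\<forall>g B. (\<forall>x. isCont g x) \<longrightarrow> (\<forall>x. norm (g x) \<le> B) \<longrightarrow>
        (\<lambda>n. avgf S ((s \<circ> r) n) g) \<longlonglongrightarrow> integral\<^sup>L \<nu> g"
      using r(3) by simp
    interpret LS: lim_setup S \<nu> "s \<circ> r"
      by (rule lim_setup.intro[OF S r(2) strict_mono_o[OF \<open>strict_mono s\<close> r(1)] c4])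
    have "LS.mu = \<mu>0" by (rule uniq[OF LS.mu_inv])
    have "(\<lambda>n. avgf S (s (r n)) (\<lambda>r. D 0 r * D (-m) r)) \<longlonglongrightarrow> integral\<^sup>L \<nu> (\<lambda>r. D 0 r * D (-m) r)"
      by (rule r(3)) (use D_prod_cont D_prod_bd in blast)+
    also have "integral\<^sup>L \<nu> (\<lambda>r. D 0 r * D (-m) r) = L"
      unfolding L_def LS.mu_int[symmetric] \<open>LS.mu = \<mu>0\<close> ..
    finally have "(\<lambda>n. autocorr_avg S m (s (r n))) \<longlonglongrightarrow> L"
      using autocorr_avgf[OF S] by simp
    then have "eventually (\<lambda>n. dist (autocorr_avg S m (s (r n))) L < e) sequentially"
      using \<open>e > 0\<close> by (rule tendstoD)
    then obtain n where "dist (autocorr_avg S m (s (r n))) L < e" by (meson eventually_sequentially order_refl)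
    then show False using s by blast
  qed
  then show ?thesis by (auto simp: convergent_def)
qed

lemma sq_bracket: "\<exists>k::nat. k^2 \<le> N \<and> N < (Suc k)^2"
proof (induct N)
  case 0 then show ?case by (intro exI[of _ 0]) auto
next
  case (Suc N)
  then obtain k where k: "k^2 \<le> N" "N < (Suc k)^2" by blast
  show ?case
  proof (cases "Suc N < (Suc k)^2")
    case True then show ?thesis using k by (intro exI[of _ k]) auto
  next
    case False
    then have "Suc N = (Suc k)^2" using k by auto
    moreover have "(Suc k)^2 < (Suc (Suc k))^2" by (simp add: power2_eq_square)
    ultimately show ?thesis by (intro exI[of _ "Suc k"]) auto
  qed
qed

lemma det_conv:
  fixes a :: "nat \<Rightarrow> real"
  assumes inc: "\<And>K N. K \<le> N \<Longrightarrow> \<bar>a N - a K\<bar> \<le> 4 * real (N - K)"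
    and sq: "\<And>e. e > 0 \<Longrightarrow> eventually (\<lambda>k. \<bar>a (k^2)\<bar> \<le> e * (2 * real (k^2) + 1)) sequentially"
  shows "(\<lambda>N. a N / (2 * real N + 1)) \<longlonglongrightarrow> 0"
proof (rule LIMSEQ_I)
  fix e :: real assume e: "0 < e"
  obtain K1 where K1: "\<And>k. k \<ge> K1 \<Longrightarrow> \<bar>a (k^2)\<bar> \<le> (e/4) * (2 * real (k^2) + 1)"
    using sq[of "e/4"] e unfolding eventually_sequentially by auto
  define K2 where "K2 = nat \<lceil>16 / e\<rceil> + 1"
  define K where "K = max K1 K2"
  show "\<exists>no. \<forall>n\<ge>no. norm (a n / (2 * real n + 1) - 0) < e"
  proof (intro exI[of _ "K^2"] allI impI)
    fix N assume N: "K^2 \<le> N"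
    obtain k where k: "k^2 \<le> N" "N < (Suc k)^2" using sq_bracket by blast
    have "K < Suc k" using N k(2) by (metis le_less_trans power_less_imp_less_base zero_le)
    then have kK: "K \<le> k" by simp
    have k1: "k \<ge> K1" "k \<ge> K2" using kK unfolding K_def by auto
    have kpos: "real k > 0" using k1(2) unfolding K2_def by simp
    have "real k \<ge> 16 / e" using k1(2) unfolding K2_def by linarith
    then have k16: "4 / real k \<le> e / 4" using e kpos by (simp add: field_simps)
    have Nk: "real (N - k^2) \<le> 2 * real k"
    proof -
      have "N - k^2 \<le> 2 * k" using k(2) by (simp add: power2_eq_square)
      then show ?thesis by linarith
    qed
    have "\<bar>a N\<bar> \<le> \<bar>a (k^2)\<bar> + 4 * real (N - k^2)" using inc[OF k(1)] by linarith
    also have "\<dots> \<le> (e/4) * (2 * real (k^2) + 1) + 8 * real k" using K1[OF k1(1)] Nk by linarith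
    finally have aN: "\<bar>a N\<bar> \<le> (e/4) * (2 * real (k^2) + 1) + 8 * real k" .
    have den: "2 * real (k^2) + 1 \<le> 2 * real N + 1" using k(1) by simp
    have "\<bar>a N\<bar> / (2 * real N + 1) \<le> ((e/4) * (2 * real (k^2) + 1) + 8 * real k) / (2 * real N + 1)"
      using aN by (intro divide_right_mono) auto
    also have "\<dots> = (e/4) * ((2 * real (k^2) + 1) / (2 * real N + 1)) + 8 * real k / (2 * real N + 1)"
      by (metis add_divide_distrib times_divide_eq_right)
    also have "\<dots> \<le> (e/4) * 1 + 8 * real k / (2 * real (k^2))"
    proof -
      have A: "(2 * real (k^2) + 1) / (2 * real N + 1) \<le> 1" using den by simp
      have k2: "0 < (real k)^2" using kpos by simp
      have d2: "(real k)^2 \<le> real N" by (metis k(1) of_nat_le_iff of_nat_power)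
      have B: "8 * real k / (2 * real N + 1) \<le> 8 * real k / (2 * real (k^2))"
        apply (rule divide_left_mono)
        subgoal unfolding of_nat_power using d2 by linarith
        subgoal by simp
        subgoal unfolding of_nat_power using k2 by (intro mult_pos_pos) auto
        done
      have "(e/4) * ((2 * real (k^2) + 1) / (2 * real N + 1)) \<le> (e/4) * 1"
        by (rule mult_left_mono[OF A]) (use e in simp)
      then show ?thesis using B by linarith
    qed
    also have "8 * real k / (2 * real (k^2)) = 4 / real k" using kpos by (simp add: power2_eq_square)
    finally have fin: "\<bar>a N\<bar> / (2 * real N + 1) \<le> (e/4) * 1 + 4 / real k" .
    have eq: "norm (a N / (2 * real N + 1) - 0) = \<bar>a N\<bar> / (2 * real N + 1)"
      by (simp add: abs_divide)
    show "norm (a N / (2 * real N + 1) - 0) < e" unfolding eq using fin k16 e by linarith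
  qed
qed

lemma aux_ineq:
  fixes e d s :: real assumes "e > 0" "d > 0" "s > 0" "s \<le> 2 * d"
  shows "12 / (e^2 * d) \<le> 24 / e^2 * inverse s"
proof -
  have "1 / d \<le> 2 / s" using assms by (simp add: divide_simps)
  then have "(12 / e^2) * (1 / d) \<le> (12 / e^2) * (2 / s)" by (rule mult_left_mono) simp
  then show ?thesis by (simp add: divide_inverse)
qed

lemma (in prob_space) slln_mdep:
  fixes W :: "int \<Rightarrow> 'a \<Rightarrow> real" and m :: int
  assumes meas[measurable]: "\<And>i. W i \<in> borel_measurable M"
    and bd: "\<And>i \<omega>. \<omega> \<in> space M \<Longrightarrow> \<bar>W i \<omega>\<bar> \<le> 2"
    and unc: "\<And>i j. j \<noteq> i \<Longrightarrow> j \<noteq> i + m \<Longrightarrow> j \<noteq> i - m \<Longrightarrow> expectation (\<lambda>\<omega>. W i \<omega> * W j \<omega>) = 0"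
  shows "AE \<omega> in M. (\<lambda>N. (\<Sum>i\<in>{-int N..int N}. W i \<omega>) / (2 * real N + 1)) \<longlonglongrightarrow> 0"
proof -
  define A where "A N \<omega> = (\<Sum>i\<in>{-int N..int N}. W i \<omega>)" for N \<omega>
  have Am[measurable]: "A N \<in> borel_measurable M" for N unfolding A_def by measurable
  have bdWW: "\<bar>W i \<omega> * W j \<omega>\<bar> \<le> 4" if "\<omega> \<in> space M" for i j \<omega>
  proof -
    have "\<bar>W i \<omega> * W j \<omega>\<bar> = \<bar>W i \<omega>\<bar> * \<bar>W j \<omega>\<bar>" by (simp add: abs_mult)
    also have "\<dots> \<le> 2 * 2" by (intro mult_mono bd that) auto
    finally show ?thesis by simp
  qed
  have intW: "integrable M (\<lambda>\<omega>. W i \<omega> * W j \<omega>)" for i j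
    by (rule integrable_const_bound[where B=4]) (use bdWW in \<open>auto intro!: AE_I2\<close>)
  have EWW: "expectation (\<lambda>\<omega>. W i \<omega> * W j \<omega>) \<le> 4" for i j
  proof -
    have "expectation (\<lambda>\<omega>. W i \<omega> * W j \<omega>) \<le> expectation (\<lambda>\<omega>. 4)"
      by (rule integral_mono[OF intW]) (auto intro: abs_le_D1 bdWW)
    then show ?thesis by (simp add: prob_space)
  qed
  have E2: "expectation (\<lambda>\<omega>. (A N \<omega>)^2) \<le> 12 * (2 * real N + 1)" for N
  proof -
    define I where "I = {-int N..int N}"
    have fI: "finite I" unfolding I_def by simp
    have sq: "(A N \<omega>)^2 = (\<Sum>i\<in>I. \<Sum>j\<in>I. W i \<omega> * W j \<omega>)" for \<omega>
      unfolding A_def I_def power2_eq_square sum_product ..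
    have "expectation (\<lambda>\<omega>. (A N \<omega>)^2) = expectation (\<lambda>\<omega>. \<Sum>i\<in>I. \<Sum>j\<in>I. W i \<omega> * W j \<omega>)"
      unfolding sq ..
    also have "\<dots> = (\<Sum>i\<in>I. expectation (\<lambda>\<omega>. \<Sum>j\<in>I. W i \<omega> * W j \<omega>))"
      by (rule Bochner_Integration.integral_sum) (simp add: integrable_sum intW)
    also have "\<dots> = (\<Sum>i\<in>I. \<Sum>j\<in>I. expectation (\<lambda>\<omega>. W i \<omega> * W j \<omega>))"
      by (intro sum.cong refl Bochner_Integration.integral_sum intW)
    also have "\<dots> \<le> (\<Sum>i\<in>I. 12)"
    proof (rule sum_mono)
      fix i assume "i \<in> I"
      define K where "K = {i, i + m, i - m}"
      have "(\<Sum>j\<in>I. expectation (\<lambda>\<omega>. W i \<omega> * W j \<omega>)) =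
          (\<Sum>j\<in>I \<inter> K. expectation (\<lambda>\<omega>. W i \<omega> * W j \<omega>)) + (\<Sum>j\<in>I - K. expectation (\<lambda>\<omega>. W i \<omega> * W j \<omega>))"
        by (rule sum.Int_Diff[OF fI])
      also have "(\<Sum>j\<in>I - K. expectation (\<lambda>\<omega>. W i \<omega> * W j \<omega>)) = 0"
        by (intro sum.neutral ballI unc) (auto simp: K_def)
      also have "(\<Sum>j\<in>I \<inter> K. expectation (\<lambda>\<omega>. W i \<omega> * W j \<omega>)) \<le> real (card (I \<inter> K)) * 4"
        by (rule sum_bounded_above) (rule EWW)
      also have "card (I \<inter> K) \<le> 3"
      proof -
        have "card (I \<inter> K) \<le> card K" by (rule card_mono) (auto simp: K_def)
        also have "card K \<le> 3" unfolding K_def by (simp add: card_insert_if)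
        finally show ?thesis .
      qed
      then have "real (card (I \<inter> K)) * 4 \<le> 12" by simp
      finally show "(\<Sum>j\<in>I. expectation (\<lambda>\<omega>. W i \<omega> * W j \<omega>)) \<le> 12" by simp
    qed
    also have "\<dots> = 12 * (2 * real N + 1)" unfolding I_def by (simp add: nat_add_distrib)
    finally show ?thesis .
  qed
  have intA2: "integrable M (\<lambda>\<omega>. (A N \<omega>)^2)" for N
  proof -
    have "(\<lambda>\<omega>. (A N \<omega>)^2) = (\<lambda>\<omega>. \<Sum>i\<in>{-int N..int N}. \<Sum>j\<in>{-int N..int N}. W i \<omega> * W j \<omega>)"
      unfolding A_def power2_eq_square sum_product ..
    then show ?thesis by (simp add: integrable_sum intW)
  qed
  have markov: "prob {\<omega>\<in>space M. \<delta> \<le> \<bar>A N \<omega>\<bar>} \<le> 12 * (2 * real N + 1) / \<delta>^2" if "\<delta> > 0" for \<delta> N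
  proof -
    have "{\<omega>\<in>space M. \<delta> \<le> \<bar>A N \<omega>\<bar>} = {\<omega>\<in>space M. \<delta>^2 \<le> (A N \<omega>)^2}"
      using that abs_le_square_iff[of \<delta>] by auto
    moreover have "prob {\<omega>\<in>space M. \<delta>^2 \<le> (A N \<omega>)^2} \<le> expectation (\<lambda>\<omega>. (A N \<omega>)^2) / \<delta>^2"
      by (rule integral_Markov_inequality_measure[OF intA2, where A="space M"]) (use that in auto)
    moreover have "expectation (\<lambda>\<omega>. (A N \<omega>)^2) / \<delta>^2 \<le> 12 * (2 * real N + 1) / \<delta>^2"
      by (intro divide_right_mono E2) auto
    ultimately show ?thesis by simp
  qed
  have ev: "AE \<omega> in M. eventually (\<lambda>k. \<bar>A (k^2) \<omega>\<bar> \<le> e * (2 * real (k^2) + 1)) sequentially"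
    if e: "e > 0" for e
  proof -
    define B where "B k = {\<omega>\<in>space M. e * (2 * real (k^2) + 1) \<le> \<bar>A (k^2) \<omega>\<bar>}" for k
    have Bm: "B k \<in> sets M" for k unfolding B_def by measurable
    have pB: "prob (B k) \<le> 24 / e^2 * inverse (real (Suc k) ^ 2)" for k
    proof -
      define d where "d = 2 * real (k^2) + 1"
      have "0 \<le> real (k^2)" by (rule of_nat_0_le_iff)
      then have dpos: "d > 0" unfolding d_def by linarith
      have Bd: "B k = {\<omega>\<in>space M. e * d \<le> \<bar>A (k^2) \<omega>\<bar>}" unfolding B_def d_def ..
      have "prob (B k) \<le> 12 * (2 * real (k^2) + 1) / (e * d)^2"
        unfolding Bd by (rule markov) (use e dpos in simp)
      then have "prob (B k) \<le> 12 * d / (e * d)^2" unfolding d_def .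
      also have "\<dots> = 12 / (e^2 * d)" using dpos e by (simp add: power2_eq_square)
      also have "\<dots> \<le> 24 / e^2 * inverse (real (Suc k) ^ 2)"
      proof (rule aux_ineq[OF e dpos])
        show "0 < real (Suc k) ^ 2" by simp
        have "(Suc k)^2 \<le> 2 * (2 * k^2 + 1)"
        proof -
          have "k \<le> k * k" by (rule le_square)
          moreover have "(Suc k)^2 = k * k + 2 * k + 1" by (simp add: power2_eq_square)
          moreover have "2 * (2 * k^2 + 1) = 4 * (k * k) + 2" by (simp add: power2_eq_square)
          ultimately show ?thesis by linarith
        qed
        then have "real ((Suc k)^2) \<le> real (2 * (2 * k^2 + 1))" by (rule of_nat_mono)
        then show "real (Suc k) ^ 2 \<le> 2 * d" unfolding d_def by simp
      qed
      finally show ?thesis .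
    qed
    have sg: "summable (\<lambda>k. 24 / e^2 * inverse (real (Suc k) ^ 2))"
    proof -
      have "summable (\<lambda>k. inverse (real k ^ 2))" by (rule inverse_power_summable) auto
      then have "summable (\<lambda>k. inverse (real (k + 1) ^ 2))" by (subst summable_iff_shift) 
      then show ?thesis by (intro summable_mult) simp
    qed
    have sB: "summable (\<lambda>k. measure M (B k))"
      by (rule summable_comparison_test'[OF sg]) (use pB in auto)
    have "AE \<omega> in M. eventually (\<lambda>k. \<omega> \<in> space M - B k) sequentially"
      by (rule borel_cantelli_AE1[OF Bm _ sB]) (simp add: emeasure_eq_measure)
    then show ?thesis
    proof eventually_elim
      fix \<omega> assume "eventually (\<lambda>k. \<omega> \<in> space M - B k) sequentially"
      then show "eventually (\<lambda>k. \<bar>A (k^2) \<omega>\<bar> \<le> e * (2 * real (k^2) + 1)) sequentially"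
        by eventually_elim (auto simp: B_def)
    qed
  qed
  have "AE \<omega> in M. \<forall>j::nat. eventually (\<lambda>k. \<bar>A (k^2) \<omega>\<bar> \<le> inverse (real (Suc j)) * (2 * real (k^2) + 1)) sequentially"
    unfolding AE_all_countable by (intro allI ev) simp
  from this AE_space show ?thesis
  proof eventually_elim
    fix \<omega> assume H: "\<forall>j::nat. eventually (\<lambda>k. \<bar>A (k^2) \<omega>\<bar> \<le> inverse (real (Suc j)) * (2 * real (k^2) + 1)) sequentially"
      and \<omega>: "\<omega> \<in> space M"
    have "(\<lambda>N. A N \<omega> / (2 * real N + 1)) \<longlonglongrightarrow> 0"
    proof (rule det_conv)
      fix K N :: nat assume KN: "K \<le> N"
      define I where "I = {-int N..int N}"
      define J where "J = {-int K..int K}"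
      have JI: "J \<subseteq> I" using KN unfolding I_def J_def by auto
      have "A N \<omega> - A K \<omega> = sum (\<lambda>i. W i \<omega>) (I - J)"
        unfolding A_def I_def[symmetric] J_def[symmetric] by (subst sum_diff) (use JI in \<open>auto simp: I_def\<close>)
      also have "\<bar>\<dots>\<bar> \<le> sum (\<lambda>i. \<bar>W i \<omega>\<bar>) (I - J)" by (rule sum_abs)
      also have "\<dots> \<le> real (card (I - J)) * 2" by (rule sum_bounded_above) (rule bd[OF \<omega>])
      also have "card (I - J) = 2 * (N - K)"
        using card_Diff_subset[OF _ JI] KN unfolding I_def J_def by (auto simp: J_def)
      finally show "\<bar>A N \<omega> - A K \<omega>\<bar> \<le> 4 * real (N - K)" by simp
    next
      fix e :: real assume "e > 0"
      then obtain j where j: "inverse (real (Suc j)) < e" using reals_Archimedean by blast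
      from H[rule_format, of j]
      show "eventually (\<lambda>k. \<bar>A (k^2) \<omega>\<bar> \<le> e * (2 * real (k^2) + 1)) sequentially"
      proof eventually_elim
        fix k assume "\<bar>A (k^2) \<omega>\<bar> \<le> inverse (real (Suc j)) * (2 * real (k^2) + 1)"
        moreover have "inverse (real (Suc j)) * (2 * real (k^2) + 1) \<le> e * (2 * real (k^2) + 1)"
          using j by (intro mult_right_mono) auto
        ultimately show "\<bar>A (k^2) \<omega>\<bar> \<le> e * (2 * real (k^2) + 1)" by linarith
      qed
    qed
    then show "(\<lambda>N. (\<Sum>i\<in>{-int N..int N}. W i \<omega>) / (2 * real N + 1)) \<longlonglongrightarrow> 0"
      unfolding A_def .
  qed
qed

lemma pm_cases: "x \<in> {-1, 1::real} \<Longrightarrow> x = -1 \<or> x = 1" by auto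

context prob_space begin

lemma bern_facts:
  fixes Y :: "int \<Rightarrow> 'a \<Rightarrow> real" and p :: real
  assumes Y_rv: "\<forall>i. Y i \<in> borel_measurable M"
    and Y_indep: "indep_vars (\<lambda>_. borel) Y UNIV"
    and Y_pm: "\<forall>i. \<forall>\<omega>\<in>space M. Y i \<omega> \<in> {-1, 1}"
    and Y_p: "\<forall>i. measure M {\<omega> \<in> space M. Y i \<omega> = 1} = p"
  shows "\<And>i. expectation (Y i) = 2 * p - 1"
    and "\<And>a b. a \<noteq> b \<Longrightarrow> expectation (\<lambda>\<omega>. Y a \<omega> * Y b \<omega>) = (2 * p - 1)^2"
    and "\<And>a b c d. distinct [a, b, c, d] \<Longrightarrow>
           expectation (\<lambda>\<omega>. Y a \<omega> * Y b \<omega> * Y c \<omega> * Y d \<omega>) = (2 * p - 1)^4"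
proof -
  have Ym[measurable]: "Y i \<in> borel_measurable M" for i using Y_rv by auto
  have Yb: "norm (Y i \<omega>) \<le> 1" if "\<omega> \<in> space M" for i \<omega>
  proof -
    have "Y i \<omega> = -1 \<or> Y i \<omega> = 1" using Y_pm that by auto
    then show ?thesis by auto
  qed
  have intY: "integrable M (Y i)" for i
    by (rule integrable_const_bound[where B=1]) (use Yb in \<open>auto intro!: AE_I2\<close>)
  show EY: "expectation (Y i) = 2 * p - 1" for i
  proof -
    define B where "B = {\<omega> \<in> space M. Y i \<omega> = 1}"
    have Bm[measurable]: "B \<in> sets M" unfolding B_def by measurable
    have "expectation (Y i) = expectation (\<lambda>\<omega>. 2 * indicator B \<omega> - 1)"
    proof (rule Bochner_Integration.integral_cong[OF refl])
      fix \<omega> assume "\<omega> \<in> space M"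
      then have "Y i \<omega> = -1 \<or> Y i \<omega> = 1" using Y_pm by auto
      then show "Y i \<omega> = 2 * indicator B \<omega> - 1" using \<open>\<omega> \<in> space M\<close> unfolding B_def by auto
    qed
    also have "\<dots> = expectation (\<lambda>\<omega>. 2 * indicator B \<omega>) - expectation (\<lambda>\<omega>. 1::real)"
    proof (rule Bochner_Integration.integral_diff)
      show "integrable M (\<lambda>\<omega>. 2 * indicator B \<omega> :: real)"
        by (rule integrable_const_bound[where B=2]) (auto intro!: AE_I2 simp: indicator_def)
    qed simp
    also have "\<dots> = 2 * prob B - 1"
      using sets.Int_space_eq2[OF Bm] by (simp add: emeasure_space_1 prob_space)
    also have "prob B = p" using Y_p unfolding B_def by auto
    finally show ?thesis .
  qed
  have ind: "indep_vars (\<lambda>_. borel) Y J" for J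
    by (rule indep_vars_subset[OF Y_indep]) auto
  show "expectation (\<lambda>\<omega>. Y a \<omega> * Y b \<omega>) = (2 * p - 1)^2" if "a \<noteq> b" for a b
  proof -
    have "expectation (\<lambda>\<omega>. \<Prod>k\<in>{a, b}. Y k \<omega>) = (\<Prod>k\<in>{a, b}. expectation (Y k))"
      by (rule indep_vars_lebesgue_integral) (use ind intY in auto)
    then show ?thesis using that EY by (simp add: power2_eq_square)
  qed
  show "expectation (\<lambda>\<omega>. Y a \<omega> * Y b \<omega> * Y c \<omega> * Y d \<omega>) = (2 * p - 1)^4"
    if "distinct [a, b, c, d]" for a b c d
  proof -
    have "expectation (\<lambda>\<omega>. \<Prod>k\<in>{a, b, c, d}. Y k \<omega>) = (\<Prod>k\<in>{a, b, c, d}. expectation (Y k))"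
      by (rule indep_vars_lebesgue_integral) (use ind intY in auto)
    then show ?thesis using that EY by (simp add: mult.assoc numeral_eq_Suc)
  qed
qed

end


lemma lin_aux: "(1 / (d::real)) * (c * a + b) = c * ((1 / d) * a) + b / d"
  unfolding divide_inverse by (simp add: algebra_simps)

theorem mainTheorem1:
  fixes S :: "int \<Rightarrow> real" and p :: real
    and M :: "'a measure" and Y :: "int \<Rightarrow> 'a \<Rightarrow> real"
  assumes S_pm: "\<forall>i. S i \<in> {-1, 1}"
    and ue: "uniquely_ergodic_hull S"
    and p: "0 \<le> p" "p \<le> 1"
    and M: "prob_space M"
    and Y_rv: "\<forall>i. Y i \<in> borel_measurable M"
    and Y_indep: "prob_space.indep_vars M (\<lambda>_. borel) Y UNIV"
    and Y_pm: "\<forall>i. \<forall>\<omega>\<in>space M. Y i \<omega> \<in> {-1, 1}"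
    and Y_p: "\<forall>i. measure M {\<omega> \<in> space M. Y i \<omega> = 1} = p"
  shows "AE \<omega> in M. \<forall>m. convergent (autocorr_avg (\<lambda>i. S i * Y i \<omega>) m) \<and>
           eta (\<lambda>i. S i * Y i \<omega>) m = (if m = 0 then 1 else (2 * p - 1)^2 * eta S m)"
proof -
  interpret prob_space M by (rule M)
  have Ym[measurable]: "Y i \<in> borel_measurable M" for i using Y_rv by auto
  note BF = bern_facts[OF Y_rv Y_indep Y_pm Y_p]
  define e where "e = 2 * p - 1"
  define c where "c = e^2"
  have e1: "\<bar>e\<bar> \<le> 1" using p unfolding e_def by auto
  have c01: "0 \<le> c" "c \<le> 1" unfolding c_def using e1 abs_square_le_1[of e] by auto
  have Spm: "S i = -1 \<or> S i = 1" for i using S_pm by auto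
  have Ypm: "Y i \<omega> = -1 \<or> Y i \<omega> = 1" if "\<omega> \<in> space M" for i \<omega> using Y_pm that by auto
  have SS: "S i * S i = 1" for i using Spm[of i] by auto
  have YY: "Y i \<omega> * Y i \<omega> = 1" if "\<omega> \<in> space M" for i \<omega> using Ypm[OF that, of i] by auto
  have case0: "AE \<omega> in M. convergent (autocorr_avg (\<lambda>i. S i * Y i \<omega>) 0) \<and>
           eta (\<lambda>i. S i * Y i \<omega>) 0 = 1"
  proof (rule AE_I2)
    fix \<omega> assume \<omega>: "\<omega> \<in> space M"
    have "autocorr_avg (\<lambda>i. S i * Y i \<omega>) 0 N = 1" for N
    proof -
      have "(\<Sum>i\<in>{-int N..int N}. S i * Y i \<omega> * (S (i - 0) * Y (i - 0) \<omega>)) = (\<Sum>i\<in>{-int N..int N}. 1)"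
      proof (rule sum.cong[OF refl])
        fix i
        have "S i * Y i \<omega> * (S (i - 0) * Y (i - 0) \<omega>) = (S i * S i) * (Y i \<omega> * Y i \<omega>)" by simp
        then show "S i * Y i \<omega> * (S (i - 0) * Y (i - 0) \<omega>) = 1" using SS YY[OF \<omega>] by simp
      qed
      then show ?thesis unfolding autocorr_avg_def by (simp add: nat_add_distrib)
    qed
    then have "autocorr_avg (\<lambda>i. S i * Y i \<omega>) 0 = (\<lambda>_. 1)" by auto
    then show "convergent (autocorr_avg (\<lambda>i. S i * Y i \<omega>) 0) \<and> eta (\<lambda>i. S i * Y i \<omega>) 0 = 1"
      unfolding eta_def by (simp add: convergent_const)
  qed
  have casem: "AE \<omega> in M. convergent (autocorr_avg (\<lambda>i. S i * Y i \<omega>) m) \<and>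
           eta (\<lambda>i. S i * Y i \<omega>) m = c * eta S m" if m: "m \<noteq> 0" for m
  proof -
    define W where "W i \<omega> = S i * S (i - m) * (Y i \<omega> * Y (i - m) \<omega> - c)" for i \<omega>
    have Wm[measurable]: "W i \<in> borel_measurable M" for i unfolding W_def by measurable
    have bd: "\<bar>W i \<omega>\<bar> \<le> 2" if "\<omega> \<in> space M" for i \<omega>
    proof -
      have a: "\<bar>S i * S (i - m)\<bar> = 1" using Spm[of i] Spm[of "i - m"] by auto
      have b: "\<bar>Y i \<omega> * Y (i - m) \<omega> - c\<bar> \<le> 2" using Ypm[OF that, of i] Ypm[OF that, of "i - m"] c01 by auto
      have "\<bar>W i \<omega>\<bar> = \<bar>S i * S (i - m)\<bar> * \<bar>Y i \<omega> * Y (i - m) \<omega> - c\<bar>"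
        unfolding W_def by (rule abs_mult)
      then show ?thesis using a b by simp
    qed
    have intb: "integrable M f" if "f \<in> borel_measurable M" "\<And>\<omega>. \<omega> \<in> space M \<Longrightarrow> \<bar>f \<omega>\<bar> \<le> 1" for f :: "'a \<Rightarrow> real"
      by (rule integrable_const_bound[where B=1]) (use that in \<open>auto intro!: AE_I2\<close>)
    have pb: "\<bar>Y a \<omega> * Y b \<omega>\<bar> \<le> 1" if "\<omega> \<in> space M" for a b \<omega>
      using Ypm[OF that, of a] Ypm[OF that, of b] by auto
    have pb4: "\<bar>Y a \<omega> * Y b \<omega> * Y c' \<omega> * Y d \<omega>\<bar> \<le> 1" if "\<omega> \<in> space M" for a b c' d \<omega>
      using Ypm[OF that, of a] Ypm[OF that, of b] Ypm[OF that, of c'] Ypm[OF that, of d] by auto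
    have i2: "integrable M (\<lambda>\<omega>. Y a \<omega> * Y b \<omega>)" for a b by (rule intb) (use pb in auto)
    have i4: "integrable M (\<lambda>\<omega>. Y a \<omega> * Y b \<omega> * Y c' \<omega> * Y d \<omega>)" for a b c' d by (rule intb) (use pb4 in auto)
    have unc: "expectation (\<lambda>\<omega>. W i \<omega> * W j \<omega>) = 0" if "j \<noteq> i" "j \<noteq> i + m" "j \<noteq> i - m" for i j
    proof -
      define K where "K = S i * S (i - m) * (S j * S (j - m))"
      have dist: "distinct [i, i - m, j, j - m]" using that m by auto
      have "expectation (\<lambda>\<omega>. W i \<omega> * W j \<omega>) =
          expectation (\<lambda>\<omega>. K * (Y i \<omega> * Y (i - m) \<omega> * Y j \<omega> * Y (j - m) \<omega>) - K * c * (Y i \<omega> * Y (i - m) \<omega>)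
             - K * c * (Y j \<omega> * Y (j - m) \<omega>) + K * c^2)"
        unfolding W_def K_def by (rule Bochner_Integration.integral_cong[OF refl]) (simp add: algebra_simps power2_eq_square)
      also have "\<dots> = K * expectation (\<lambda>\<omega>. Y i \<omega> * Y (i - m) \<omega> * Y j \<omega> * Y (j - m) \<omega>)
          - K * c * expectation (\<lambda>\<omega>. Y i \<omega> * Y (i - m) \<omega>) - K * c * expectation (\<lambda>\<omega>. Y j \<omega> * Y (j - m) \<omega>) + K * c^2"
        using i2 i4 by (simp add: prob_space)
      also have "\<dots> = K * e^4 - K * c * e^2 - K * c * e^2 + K * c^2"
        using BF(2)[of i "i - m"] BF(2)[of j "j - m"] BF(3)[OF dist] m unfolding e_def by simp
      also have "\<dots> = 0" unfolding c_def by (simp add: power2_eq_square power4_eq_xxxx)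
      finally show ?thesis .
    qed
    have slln: "AE \<omega> in M. (\<lambda>N. (\<Sum>i\<in>{-int N..int N}. W i \<omega>) / (2 * real N + 1)) \<longlonglongrightarrow> 0"
      by (rule slln_mdep[OF Wm bd unc]) auto
    have Sconv: "autocorr_avg S m \<longlonglongrightarrow> eta S m"
      using S_conv[OF S_pm ue, of m] unfolding eta_def by (simp add: convergent_LIMSEQ_iff)
    from slln AE_space show ?thesis
    proof eventually_elim
      fix \<omega> assume lim: "(\<lambda>N. (\<Sum>i\<in>{-int N..int N}. W i \<omega>) / (2 * real N + 1)) \<longlonglongrightarrow> 0"
        and \<omega>: "\<omega> \<in> space M"
      have eq: "autocorr_avg (\<lambda>i. S i * Y i \<omega>) m N =
          c * autocorr_avg S m N + (\<Sum>i\<in>{-int N..int N}. W i \<omega>) / (2 * real N + 1)" for N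
      proof -
        have "(\<Sum>i\<in>{-int N..int N}. S i * Y i \<omega> * (S (i - m) * Y (i - m) \<omega>)) =
            c * (\<Sum>i\<in>{-int N..int N}. S i * S (i - m)) + (\<Sum>i\<in>{-int N..int N}. W i \<omega>)"
          unfolding W_def sum_distrib_left sum.distrib[symmetric]
          by (rule sum.cong[OF refl]) (simp add: algebra_simps)
        then show ?thesis unfolding autocorr_avg_def by (simp add: lin_aux add_divide_distrib)
      qed
      have "(\<lambda>N. autocorr_avg (\<lambda>i. S i * Y i \<omega>) m N) \<longlonglongrightarrow> c * eta S m + 0"
        unfolding eq by (intro tendsto_add tendsto_mult_left Sconv lim)
      then have L: "autocorr_avg (\<lambda>i. S i * Y i \<omega>) m \<longlonglongrightarrow> c * eta S m" by simp
      show "convergent (autocorr_avg (\<lambda>i. S i * Y i \<omega>) m) \<and> eta (\<lambda>i. S i * Y i \<omega>) m = c * eta S m"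
        using L unfolding eta_def by (auto simp: convergent_def limI)
    qed
  qed
  have "\<forall>m. AE \<omega> in M. convergent (autocorr_avg (\<lambda>i. S i * Y i \<omega>) m) \<and>
           eta (\<lambda>i. S i * Y i \<omega>) m = (if m = 0 then 1 else (2 * p - 1)^2 * eta S m)"
  proof
    fix m :: int
    show "AE \<omega> in M. convergent (autocorr_avg (\<lambda>i. S i * Y i \<omega>) m) \<and>
           eta (\<lambda>i. S i * Y i \<omega>) m = (if m = 0 then 1 else (2 * p - 1)^2 * eta S m)"
    proof (cases "m = 0")
      case True then show ?thesis using case0 by simp
    next
      case False then show ?thesis using casem[OF False] unfolding c_def e_def by simp
    qed
  qed
  then show ?thesis unfolding AE_all_countable .
qed

end
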